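(* Let $M,N$ be matroids on a common set $E$, let $I$ be independent in both $M$ and $N$, let $W:=W(M/I,N/I)$ and let $B\in B(M/I,N/I,W)$. Then $I\cup B$ is a nice feasible set with respect to $(M,N)$.
   Context: Matroids are possibly infinite. $M^*$ dual, $M\upharpoonright X$ restriction, $M/X:=(M^*\upharpoonright(E\setminus X))^*$ (on $E\setminus X$), $M.X:=M/(E\setminus X)$. A loop is an element $e$ with $\{e\}$ dependent; $r(K)=0$ means the empty set is a base of $K$. $W$ is an $(M,N)$-wave if $M\upharpoonright W$ has a base independent in $N.W$; the union of all waves is a wave, denoted $W(M,N)$. $B(M,N,X)$ is the set of common bases of $M\upharpoonright X$ and $N.X$. $\mathsf{cond}(M,N)$: for every $(M,N)$-wave $W$, $N.W$ has an $M$-independent base. $\mathsf{cond}^+(M,N)$: $W(M,N)$ consists of $M$-loops and $r(N.W(M,N))=0$. A set $I$ independent in both $M$ and $N$ is feasible if $\mathsf{cond}(M/I,N/I)$ holds, and nice feasible if moreover $\mathsf{cond}^+(M/I,N/I)$ holds. *)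

theory Defs
  imports Main
begin

text \<open>Possibly infinite matroids, given by a ground set and a family of
independent sets, with the axioms (I1), (I2), (I3) and (IM).\<close>

type_synonym 'a matroid = "'a set \<times> 'a set set"

definition ground :: "'a matroid \<Rightarrow> 'a set" where
  "ground M = fst M"

definition indep :: "'a matroid \<Rightarrow> 'a set \<Rightarrow> bool" where
  "indep M I \<longleftrightarrow> I \<in> snd M"

definition base :: "'a matroid \<Rightarrow> 'a set \<Rightarrow> bool" where
  "base M B \<longleftrightarrow> indep M B \<and> (\<forall>J. indep M J \<and> B \<subseteq> J \<longrightarrow> J = B)"

definition is_matroid :: "'a matroid \<Rightarrow> bool" where
  "is_matroid M \<longleftrightarrow>
     (\<forall>I. indep M I \<longrightarrow> I \<subseteq> ground M) \<and>
     indep M {} \<and>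
     (\<forall>I J. indep M J \<and> I \<subseteq> J \<longrightarrow> indep M I) \<and>
     (\<forall>I B. indep M I \<and> \<not> base M I \<and> base M B \<longrightarrow>
            (\<exists>x \<in> B - I. indep M (insert x I))) \<and>
     (\<forall>I X. indep M I \<and> I \<subseteq> X \<and> X \<subseteq> ground M \<longrightarrow>
            (\<exists>J. indep M J \<and> I \<subseteq> J \<and> J \<subseteq> X \<and>
                 (\<forall>K. indep M K \<and> J \<subseteq> K \<and> K \<subseteq> X \<longrightarrow> K = J)))"

definition dual :: "'a matroid \<Rightarrow> 'a matroid" where
  "dual M = (ground M, {X. X \<subseteq> ground M \<and> (\<exists>B. base M B \<and> X \<inter> B = {})})"

text \<open>Restriction \<open>M \<upharpoonright> X\<close> (used for \<open>X \<subseteq> E\<close>).\<close>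
definition restr :: "'a matroid \<Rightarrow> 'a set \<Rightarrow> 'a matroid" where
  "restr M X = (X, {I. indep M I \<and> I \<subseteq> X})"

definition contr :: "'a matroid \<Rightarrow> 'a set \<Rightarrow> 'a matroid" where
  "contr M X = dual (restr (dual M) (ground M - X))"

definition contr_to :: "'a matroid \<Rightarrow> 'a set \<Rightarrow> 'a matroid" where
  "contr_to M X = contr M (ground M - X)"

definition loop :: "'a matroid \<Rightarrow> 'a \<Rightarrow> bool" where
  "loop M e \<longleftrightarrow> e \<in> ground M \<and> \<not> indep M {e}"

definition rank_zero :: "'a matroid \<Rightarrow> bool" where
  "rank_zero K \<longleftrightarrow> base K {}"

definition wave :: "'a matroid \<Rightarrow> 'a matroid \<Rightarrow> 'a set \<Rightarrow> bool" where
  "wave M N W \<longleftrightarrow> W \<subseteq> ground M \<and>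
     (\<exists>B. base (restr M W) B \<and> indep (contr_to N W) B)"

definition wave_union :: "'a matroid \<Rightarrow> 'a matroid \<Rightarrow> 'a set" where
  "wave_union M N = \<Union>{W. wave M N W}"

definition common_bases :: "'a matroid \<Rightarrow> 'a matroid \<Rightarrow> 'a set \<Rightarrow> 'a set set" where
  "common_bases M N X = {B. base (restr M X) B \<and> base (contr_to N X) B}"

definition cond :: "'a matroid \<Rightarrow> 'a matroid \<Rightarrow> bool" where
  "cond M N \<longleftrightarrow> (\<forall>W. wave M N W \<longrightarrow> (\<exists>B. base (contr_to N W) B \<and> indep M B))"

definition cond_plus :: "'a matroid \<Rightarrow> 'a matroid \<Rightarrow> bool" where
  "cond_plus M N \<longleftrightarrow> (\<forall>e \<in> wave_union M N. loop M e) \<and>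
                      rank_zero (contr_to N (wave_union M N))"

definition feasible :: "'a matroid \<Rightarrow> 'a matroid \<Rightarrow> 'a set \<Rightarrow> bool" where
  "feasible M N I \<longleftrightarrow> indep M I \<and> indep N I \<and> cond (contr M I) (contr N I)"

definition nice_feasible :: "'a matroid \<Rightarrow> 'a matroid \<Rightarrow> 'a set \<Rightarrow> bool" where
  "nice_feasible M N I \<longleftrightarrow> feasible M N I \<and> cond_plus (contr M I) (contr N I)"

end

theory Submission
  imports Defs
begin

lemma ground_dual[simp]: "ground (dual M) = ground M"
  by (simp add: dual_def ground_def)
lemma indep_dual: "indep (dual M) X \<longleftrightarrow> X \<subseteq> ground M \<and> (\<exists>B. base M B \<and> X \<inter> B = {})"
  by (simp add: dual_def indep_def ground_def)
lemma ground_restr[simp]: "ground (restr M X) = X"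
  by (simp add: restr_def ground_def)
lemma indep_restr: "indep (restr M X) Y \<longleftrightarrow> indep M Y \<and> Y \<subseteq> X"
  by (simp add: restr_def indep_def)
lemma ground_contr[simp]: "ground (contr M X) = ground M - X"
  by (simp add: contr_def)
lemma indep_contr_raw: "indep (contr M X) Y \<longleftrightarrow> Y \<subseteq> ground M - X \<and>
   (\<exists>D. base (restr (dual M) (ground M - X)) D \<and> Y \<inter> D = {})"
  by (simp add: contr_def indep_dual)

definition maxin :: "'a matroid \<Rightarrow> 'a set \<Rightarrow> 'a set \<Rightarrow> bool" where
  "maxin M X J \<longleftrightarrow> indep M J \<and> J \<subseteq> X \<and> (\<forall>K. indep M K \<and> J \<subseteq> K \<and> K \<subseteq> X \<longrightarrow> K = J)"

lemma m_ax1: "is_matroid M \<Longrightarrow> \<forall>I. indep M I \<longrightarrow> I \<subseteq> ground M"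
  unfolding is_matroid_def by (elim conjE)
lemma m_ax2: "is_matroid M \<Longrightarrow> indep M {}"
  unfolding is_matroid_def by (elim conjE)
lemma m_ax3: "is_matroid M \<Longrightarrow> \<forall>I J. indep M J \<and> I \<subseteq> J \<longrightarrow> indep M I"
  unfolding is_matroid_def by (elim conjE)
lemma m_ax4: "is_matroid M \<Longrightarrow> \<forall>I B. indep M I \<and> \<not> base M I \<and> base M B \<longrightarrow> (\<exists>x \<in> B - I. indep M (insert x I))"
  unfolding is_matroid_def by (elim conjE)
lemma m_ax5: "is_matroid M \<Longrightarrow> \<forall>I X. indep M I \<and> I \<subseteq> X \<and> X \<subseteq> ground M \<longrightarrow>
            (\<exists>J. indep M J \<and> I \<subseteq> J \<and> J \<subseteq> X \<and>
                 (\<forall>K. indep M K \<and> J \<subseteq> K \<and> K \<subseteq> X \<longrightarrow> K = J))"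
  unfolding is_matroid_def by (elim conjE)

lemma m_sub: "is_matroid M \<Longrightarrow> indep M I \<Longrightarrow> I \<subseteq> ground M"
  using m_ax1 by blast
lemma m_empty: "is_matroid M \<Longrightarrow> indep M {}"
  using m_ax2 by blast
lemma m_mono: "is_matroid M \<Longrightarrow> indep M J \<Longrightarrow> I \<subseteq> J \<Longrightarrow> indep M I"
  using m_ax3 by blast
lemma m_aug: "is_matroid M \<Longrightarrow> indep M I \<Longrightarrow> \<not> base M I \<Longrightarrow> base M B \<Longrightarrow> \<exists>x \<in> B - I. indep M (insert x I)"
  using m_ax4 by blast
lemma m_IM: "is_matroid M \<Longrightarrow> indep M I \<Longrightarrow> I \<subseteq> X \<Longrightarrow> X \<subseteq> ground M \<Longrightarrow> \<exists>J. maxin M X J \<and> I \<subseteq> J"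
proof -
  assume "is_matroid M" "indep M I" "I \<subseteq> X" "X \<subseteq> ground M"
  then obtain J where "indep M J \<and> I \<subseteq> J \<and> J \<subseteq> X \<and>
                 (\<forall>K. indep M K \<and> J \<subseteq> K \<and> K \<subseteq> X \<longrightarrow> K = J)"
    using m_ax5[of M] by meson
  then show ?thesis unfolding maxin_def by blast
qed

lemma m_ext_base: assumes M: "is_matroid M" and I: "indep M I" shows "\<exists>B. base M B \<and> I \<subseteq> B"
proof -
  obtain J where J: "maxin M (ground M) J" and IJ: "I \<subseteq> J"
    using m_IM[OF M I m_sub[OF M I]] by blast
  have iJ: "indep M J" and Jm: "\<And>K. indep M K \<Longrightarrow> J \<subseteq> K \<Longrightarrow> K \<subseteq> ground M \<Longrightarrow> K = J"
    using J unfolding maxin_def by auto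
  have "base M J" unfolding base_def
  proof (intro conjI allI impI)
    show "indep M J" by fact
    fix K assume K: "indep M K \<and> J \<subseteq> K"
    then have "K \<subseteq> ground M" using m_sub[OF M] by blast
    then show "K = J" using Jm K by blast
  qed
  then show ?thesis using IJ by blast
qed

lemma m_max_base:
  assumes M: "is_matroid M" and B: "base M B" and J: "maxin M X J" and BX: "B \<subseteq> X"
  shows "base M J"
proof (rule ccontr)
  assume nb: "\<not> base M J"
  have iJ: "indep M J" and JX: "J \<subseteq> X" and Jm: "\<And>K. indep M K \<Longrightarrow> J \<subseteq> K \<Longrightarrow> K \<subseteq> X \<Longrightarrow> K = J"
    using J unfolding maxin_def by auto
  obtain x where x: "x \<in> B - J" "indep M (insert x J)"
    using m_aug[OF M iJ nb B] by blast
  have "insert x J \<subseteq> X" using BX JX x by blast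
  then have "insert x J = J" using Jm x by blast
  then show False using x by blast
qed

lemma maxinD: "maxin M X J \<Longrightarrow> indep M J" "maxin M X J \<Longrightarrow> J \<subseteq> X"
  unfolding maxin_def by auto
lemma maxin_eq: "maxin M X J \<Longrightarrow> indep M K \<Longrightarrow> J \<subseteq> K \<Longrightarrow> K \<subseteq> X \<Longrightarrow> K = J"
  unfolding maxin_def by auto

lemma base_rd: "base (restr (dual M) S) D \<longleftrightarrow> D \<subseteq> S \<and> D \<subseteq> ground M \<and> (\<exists>B. base M B \<and> D \<inter> B = {}) \<and>
   (\<forall>D'. D' \<subseteq> S \<and> D' \<subseteq> ground M \<and> (\<exists>B. base M B \<and> D' \<inter> B = {}) \<and> D \<subseteq> D' \<longrightarrow> D' = D)"
proof -
  have "indep (restr (dual M) S) X \<longleftrightarrow> X \<subseteq> S \<and> X \<subseteq> ground M \<and> (\<exists>B. base M B \<and> X \<inter> B = {})" for X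
    unfolding indep_restr indep_dual by auto
  then show ?thesis unfolding base_def by (simp add: conj_assoc)
qed

lemma base_indep: "base M B \<Longrightarrow> indep M B" unfolding base_def by blast
lemma base_eq: "base M B \<Longrightarrow> indep M K \<Longrightarrow> B \<subseteq> K \<Longrightarrow> K = B" unfolding base_def by blast

lemma contr_indep:
  assumes M: "is_matroid M" and X: "X \<subseteq> ground M" and mx: "maxin M X IX"
  shows "indep (contr M X) Y \<longleftrightarrow> Y \<subseteq> ground M - X \<and> indep M (IX \<union> Y)"
proof
  assume "indep (contr M X) Y"
  then have Y: "Y \<subseteq> ground M - X" and "\<exists>D. base (restr (dual M) (ground M - X)) D \<and> Y \<inter> D = {}"
    by (simp_all add: indep_contr_raw)
  then obtain D where bD: "base (restr (dual M) (ground M - X)) D" and YD: "Y \<inter> D = {}" by blast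
  from bD have bd: "D \<subseteq> ground M - X \<and> D \<subseteq> ground M \<and> (\<exists>B. base M B \<and> D \<inter> B = {}) \<and>
   (\<forall>D'. D' \<subseteq> ground M - X \<and> D' \<subseteq> ground M \<and> (\<exists>B. base M B \<and> D' \<inter> B = {}) \<and> D \<subseteq> D' \<longrightarrow> D' = D)"
    unfolding base_rd .
  then have D: "D \<subseteq> ground M - X" by (elim conjE)
  from bd have ex: "\<exists>B. base M B \<and> D \<inter> B = {}" by (elim conjE)
  have Dmax: "D' = D" if "D' \<subseteq> ground M - X" "\<exists>B. base M B \<and> D' \<inter> B = {}" "D \<subseteq> D'" for D'
    using bd that by blast
  from ex obtain B where B: "base M B" and DB: "D \<inter> B = {}" by blast
  have iIX: "indep M IX" and IXX: "IX \<subseteq> X" using maxinD[OF mx] by auto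
  have BE: "B \<subseteq> ground M" using m_sub[OF M base_indep[OF B]] .
  have "IX \<union> B \<subseteq> ground M" using BE IXX X by blast
  then obtain J where J: "maxin M (IX \<union> B) J" and IXJ: "IX \<subseteq> J"
    using m_IM[OF M iIX, of "IX \<union> B"] by blast
  have bJ: "base M J" using m_max_base[OF M B J] by blast
  have "indep M (J \<inter> X)" using m_mono[OF M base_indep[OF bJ]] by blast
  then have JX: "J \<inter> X = IX" using maxin_eq[OF mx, of "J \<inter> X"] IXJ IXX by blast
  have JIB: "J \<subseteq> IX \<union> B" using maxinD(2)[OF J] .
  have "ground M - X - J = D"
  proof (rule Dmax)
    show "ground M - X - J \<subseteq> ground M - X" by blast
    show "\<exists>B. base M B \<and> (ground M - X - J) \<inter> B = {}" using bJ by blast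
    show "D \<subseteq> ground M - X - J" using D DB JIB IXX by blast
  qed
  then have "Y \<subseteq> J" using Y YD by blast
  then have "IX \<union> Y \<subseteq> J" using IXJ by blast
  then show "Y \<subseteq> ground M - X \<and> indep M (IX \<union> Y)"
    using Y m_mono[OF M base_indep[OF bJ]] by blast
next
  assume A: "Y \<subseteq> ground M - X \<and> indep M (IX \<union> Y)"
  have iIX: "indep M IX" and IXX: "IX \<subseteq> X" using maxinD[OF mx] by auto
  obtain J where bJ: "base M J" and IYJ: "IX \<union> Y \<subseteq> J" using m_ext_base[OF M] A by blast
  have JE: "J \<subseteq> ground M" using m_sub[OF M base_indep[OF bJ]] .
  define D where "D = ground M - X - J"
  have "base (restr (dual M) (ground M - X)) D"
    unfolding base_rd
  proof (intro conjI allI impI)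
    show "D \<subseteq> ground M" "D \<subseteq> ground M - X" unfolding D_def by auto
    show "\<exists>B. base M B \<and> D \<inter> B = {}" using bJ unfolding D_def by blast
    fix D' assume H: "D' \<subseteq> ground M - X \<and> D' \<subseteq> ground M \<and> (\<exists>B. base M B \<and> D' \<inter> B = {}) \<and> D \<subseteq> D'"
    then obtain B' where B': "base M B'" and DB': "D' \<inter> B' = {}" by blast
    have D'X: "D' \<subseteq> ground M - X" and DD': "D \<subseteq> D'" using H by auto
    have "D' \<subseteq> D"
    proof
      fix e assume eD': "e \<in> D'"
      show "e \<in> D"
      proof (rule ccontr)
        assume "e \<notin> D"
        then have eJ: "e \<in> J" using eD' D'X unfolding D_def by blast
        have BE: "B' \<subseteq> ground M" using m_sub[OF M base_indep[OF B']] .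
        have "IX \<union> B' \<subseteq> ground M" using BE IXX X by blast
        then obtain J' where J': "maxin M (IX \<union> B') J'" and IXJ': "IX \<subseteq> J'"
          using m_IM[OF M iIX, of "IX \<union> B'"] by blast
        have bJ': "base M J'" using m_max_base[OF M B' J'] by blast
        have "indep M (J' \<inter> X)" using m_mono[OF M base_indep[OF bJ']] by blast
        then have JX: "J' \<inter> X = IX" using maxin_eq[OF mx, of "J' \<inter> X"] IXJ' IXX by blast
        have J'E: "J' \<subseteq> ground M" using m_sub[OF M base_indep[OF bJ']] .
        have J'IB: "J' \<subseteq> IX \<union> B'" using maxinD(2)[OF J'] .
        have "J' \<subseteq> J"
        proof
          fix x assume xJ': "x \<in> J'"
          show "x \<in> J"
          proof (cases "x \<in> IX")
            case True then show ?thesis using IYJ by blast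
          next
            case False
            then have "x \<in> B'" using xJ' J'IB by blast
            then have "x \<notin> D'" using DB' by blast
            then have "x \<notin> D" using DD' by blast
            moreover have "x \<notin> X" using JX xJ' False by blast
            moreover have "x \<in> ground M" using J'E xJ' by blast
            ultimately show ?thesis unfolding D_def by blast
          qed
        qed
        moreover have "e \<notin> J'"
        proof
          assume "e \<in> J'"
          moreover have "e \<notin> X" using eD' D'X by blast
          moreover have "e \<notin> B'" using eD' DB' by blast
          ultimately show False using J'IB IXX by blast
        qed
        moreover have "J = J'" using base_eq[OF bJ' base_indep[OF bJ]] \<open>J' \<subseteq> J\<close> .
        ultimately show False using eJ by blast
      qed
    qed
    then show "D' = D" using DD' by blast
  qed
  moreover have "Y \<inter> D = {}" using IYJ unfolding D_def by blast
  ultimately have ex: "\<exists>D. base (restr (dual M) (ground M - X)) D \<and> Y \<inter> D = {}" by blast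
  have Y: "Y \<subseteq> ground M - X" using A by blast
  show "indep (contr M X) Y" unfolding indep_contr_raw using Y ex by (rule conjI)
qed

lemma maxin_indep: "is_matroid M \<Longrightarrow> indep M I \<Longrightarrow> maxin M I I"
  unfolding maxin_def by blast

lemma contr_indep_I:
  assumes M: "is_matroid M" and I: "indep M I"
  shows "indep (contr M I) Y \<longleftrightarrow> Y \<subseteq> ground M - I \<and> indep M (I \<union> Y)"
  using contr_indep[OF M m_sub[OF M I] maxin_indep[OF M I]] .

lemma contr_base_I:
  assumes M: "is_matroid M" and I: "indep M I"
  shows "base (contr M I) Y \<longleftrightarrow> Y \<subseteq> ground M - I \<and> base M (I \<union> Y)"
proof
  assume b: "base (contr M I) Y"
  then have Y: "Y \<subseteq> ground M - I" "indep M (I \<union> Y)"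
    unfolding base_def contr_indep_I[OF M I] by auto
  have "base M (I \<union> Y)" unfolding base_def
  proof (intro conjI allI impI)
    show "indep M (I \<union> Y)" by fact
    fix K assume K: "indep M K \<and> I \<union> Y \<subseteq> K"
    then have "indep (contr M I) (K - I)"
      unfolding contr_indep_I[OF M I] using m_sub[OF M] Un_Diff_cancel[of I K]
      by (metis Diff_mono dual_order.refl le_supE sup.absorb2)
    then have "K - I = Y" using b K Y unfolding base_def by blast
    then show "K = I \<union> Y" using K by blast
  qed
  then show "Y \<subseteq> ground M - I \<and> base M (I \<union> Y)" using Y by blast
next
  assume A: "Y \<subseteq> ground M - I \<and> base M (I \<union> Y)"
  show "base (contr M I) Y" unfolding base_def contr_indep_I[OF M I]
  proof (intro conjI allI impI)
    show "Y \<subseteq> ground M - I" "indep M (I \<union> Y)" using A unfolding base_def by auto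
    fix K assume "(K \<subseteq> ground M - I \<and> indep M (I \<union> K)) \<and> Y \<subseteq> K"
    then have "I \<union> K = I \<union> Y" "K \<inter> I = {}" using A unfolding base_def by blast+
    then show "K = Y" using A by blast
  qed
qed

lemma contr_matroid:
  assumes M: "is_matroid M" and I: "indep M I"
  shows "is_matroid (contr M I)"
  unfolding is_matroid_def
proof (intro conjI allI impI)
  fix Y assume "indep (contr M I) Y"
  then show "Y \<subseteq> ground (contr M I)" unfolding contr_indep_I[OF M I] by simp
next
  show "indep (contr M I) {}" unfolding contr_indep_I[OF M I] using I by simp
next
  fix Y Z assume "indep (contr M I) Z \<and> Y \<subseteq> Z"
  then show "indep (contr M I) Y" unfolding contr_indep_I[OF M I]
    using m_mono[OF M, of "I \<union> Z" "I \<union> Y"] by blast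
next
  fix Y B assume H: "indep (contr M I) Y \<and> \<not> base (contr M I) Y \<and> base (contr M I) B"
  then have Y: "Y \<subseteq> ground M - I" "indep M (I \<union> Y)" and nb: "\<not> base M (I \<union> Y)"
    and B: "B \<subseteq> ground M - I" "base M (I \<union> B)"
    unfolding contr_indep_I[OF M I] contr_base_I[OF M I] by auto
  obtain x where x: "x \<in> (I \<union> B) - (I \<union> Y)" "indep M (insert x (I \<union> Y))"
    using m_aug[OF M Y(2) nb B(2)] by blast
  have "x \<in> B - Y" "insert x Y \<subseteq> ground M - I" using x B Y by auto
  moreover have "indep M (I \<union> insert x Y)" using x(2) by simp
  ultimately show "\<exists>x\<in>B - Y. indep (contr M I) (insert x Y)"
    unfolding contr_indep_I[OF M I] by blast
next
  fix Y X assume H: "indep (contr M I) Y \<and> Y \<subseteq> X \<and> X \<subseteq> ground (contr M I)"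
  then have Y: "Y \<subseteq> ground M - I" "indep M (I \<union> Y)" and X: "Y \<subseteq> X" "X \<subseteq> ground M - I"
    unfolding contr_indep_I[OF M I] by auto
  have "I \<subseteq> ground M" using m_sub[OF M I] .
  then obtain J where J: "maxin M (I \<union> X) J" "I \<union> Y \<subseteq> J"
    using m_IM[OF M Y(2), of "I \<union> X"] X by blast
  show "\<exists>J. indep (contr M I) J \<and> Y \<subseteq> J \<and> J \<subseteq> X \<and>
             (\<forall>K. indep (contr M I) K \<and> J \<subseteq> K \<and> K \<subseteq> X \<longrightarrow> K = J)"
  proof (intro exI[of _ "J - I"] conjI allI impI)
    have "I \<union> (J - I) = J" using J by blast
    then show "indep (contr M I) (J - I)" unfolding contr_indep_I[OF M I]
      using J X unfolding maxin_def by auto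
    show "Y \<subseteq> J - I" using J Y by blast
    show "J - I \<subseteq> X" using J unfolding maxin_def by blast
    fix K assume K: "indep (contr M I) K \<and> J - I \<subseteq> K \<and> K \<subseteq> X"
    then have "K \<subseteq> ground M - I" "indep M (I \<union> K)" unfolding contr_indep_I[OF M I] by auto
    moreover have "J \<subseteq> I \<union> K" "I \<union> K \<subseteq> I \<union> X" using K by auto
    ultimately have "I \<union> K = J" using J unfolding maxin_def by blast
    then show "K = J - I" using \<open>K \<subseteq> ground M - I\<close> by blast
  qed
qed

theorem mainTheorem9:
  fixes M N :: "'a matroid" and E I W B :: "'a set"
  assumes "is_matroid M" and "is_matroid N"
    and "ground M = E" and "ground N = E"
    and "indep M I" and "indep N I"
    and "W = wave_union (contr M I) (contr N I)"
    and "B \<in> common_bases (contr M I) (contr N I) W"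
  shows "nice_feasible M N (I \<union> B)"
proof -
  have M: "is_matroid M" and N: "is_matroid N" using assms(1,2) .
  have gM: "ground M = E" and gN: "ground N = E" using assms(3,4) .
  have IM: "indep M I" and IN: "indep N I" using assms(5,6) .
  define M1 where "M1 = contr M I"
  define N1 where "N1 = contr N I"
  have M1m: "is_matroid M1" unfolding M1_def by (rule contr_matroid[OF M IM])
  have N1m: "is_matroid N1" unfolding N1_def by (rule contr_matroid[OF N IN])
  have iM1: "indep M1 Y \<longleftrightarrow> Y \<subseteq> E - I \<and> indep M (I \<union> Y)" for Y
    unfolding M1_def contr_indep_I[OF M IM] gM ..
  have iN1: "indep N1 Y \<longleftrightarrow> Y \<subseteq> E - I \<and> indep N (I \<union> Y)" for Y
    unfolding N1_def contr_indep_I[OF N IN] gN ..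
  have gM1: "ground M1 = E - I" unfolding M1_def using gM by simp
  have gN1: "ground N1 = E - I" unfolding N1_def using gN by simp
  have Wdef: "W = wave_union M1 N1" using assms(7) unfolding M1_def N1_def .
  have wsub: "V \<subseteq> W" if "wave M1 N1 V" for V using that unfolding Wdef wave_union_def by blast
  have WE: "W \<subseteq> E - I" unfolding Wdef wave_union_def wave_def gM1 by blast
  have cb: "base (restr M1 W) B \<and> base (contr_to N1 W) B"
    using assms(8) unfolding common_bases_def M1_def N1_def by simp
  then have bB1: "base (restr M1 W) B" and bB2: "base (contr_to N1 W) B" by auto
  have BW: "B \<subseteq> W" and iB: "indep M1 B" using base_indep[OF bB1] unfolding indep_restr by auto
  have Bmax: "K = B" if "indep M1 K" "B \<subseteq> K" "K \<subseteq> W" for K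
    using base_eq[OF bB1, of K] that unfolding indep_restr by blast
  have IBM: "indep M (I \<union> B)" using iB iM1 by blast
  have BEI: "B \<subseteq> E - I" using iB iM1 by blast
  define X0 where "X0 = E - I - W"
  have ctN1: "contr_to N1 W = contr N1 X0" unfolding contr_to_def gN1 X0_def ..
  have X0E: "X0 \<subseteq> ground N1" unfolding X0_def gN1 by blast
  have gX0: "ground N1 - X0 = W" using WE unfolding gN1 X0_def by blast
  have cN1: "indep (contr N1 X0) Y \<longleftrightarrow> Y \<subseteq> W \<and> indep N (I \<union> (I0 \<union> Y))"
    if I0: "maxin N1 X0 I0" for I0 Y
  proof -
    have "indep (contr N1 X0) Y \<longleftrightarrow> Y \<subseteq> ground N1 - X0 \<and> indep N1 (I0 \<union> Y)"
      using contr_indep[OF N1m X0E I0] .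
    also have "\<dots> \<longleftrightarrow> Y \<subseteq> W \<and> indep N (I \<union> (I0 \<union> Y))"
    proof -
      have "I0 \<subseteq> E - I" using maxinD(2)[OF I0] unfolding X0_def by blast
      then show ?thesis unfolding gX0 iN1 using WE by blast
    qed
    finally show ?thesis .
  qed
  have Bind: "indep N (I \<union> (I0 \<union> B))" if "maxin N1 X0 I0" for I0
    using base_indep[OF bB2] unfolding ctN1 cN1[OF that] by blast
  have Bmx: "\<not> indep N (I \<union> (I0 \<union> insert e B))" if "maxin N1 X0 I0" "e \<in> W" "e \<notin> B" for I0 e
  proof
    assume "indep N (I \<union> (I0 \<union> insert e B))"
    then have "indep (contr_to N1 W) (insert e B)" unfolding ctN1 cN1[OF that(1)] using BW that(2) by blast
    then have "insert e B = B" using base_eq[OF bB2] by blast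
    then show False using that(3) by blast
  qed
  obtain I0 where I0: "maxin N1 X0 I0" using m_IM[OF N1m m_ax2[OF N1m], of X0] X0E by blast
  have IBN: "indep N (I \<union> B)" using m_mono[OF N Bind[OF I0]] by blast
  have I0X: "I0 \<subseteq> X0" using maxinD(2)[OF I0] .
  define M2 where "M2 = contr M (I \<union> B)"
  define N2 where "N2 = contr N (I \<union> B)"
  have M2m: "is_matroid M2" unfolding M2_def by (rule contr_matroid[OF M IBM])
  have N2m: "is_matroid N2" unfolding N2_def by (rule contr_matroid[OF N IBN])
  have iM2: "indep M2 Y \<longleftrightarrow> Y \<subseteq> E - (I \<union> B) \<and> indep M (I \<union> B \<union> Y)" for Y
    unfolding M2_def contr_indep_I[OF M IBM] gM ..
  have iN2: "indep N2 Y \<longleftrightarrow> Y \<subseteq> E - (I \<union> B) \<and> indep N (I \<union> B \<union> Y)" for Y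
    unfolding N2_def contr_indep_I[OF N IBN] gN ..
  have gM2: "ground M2 = E - (I \<union> B)" unfolding M2_def using gM by simp
  have gN2: "ground N2 = E - (I \<union> B)" unfolding N2_def using gN by simp

  have R: "base (contr_to N2 U) {}" if U: "U \<subseteq> W - B" for U
  proof -
    define X2 where "X2 = E - (I \<union> B) - U"
    have ct: "contr_to N2 U = contr N2 X2" unfolding contr_to_def gN2 X2_def ..
    have X2E: "X2 \<subseteq> ground N2" unfolding gN2 X2_def by blast
    have I0X2: "I0 \<subseteq> X2" using I0X U BW WE unfolding X0_def X2_def by blast
    have "I \<union> B \<union> I0 = I \<union> (I0 \<union> B)" by blast
    then have "indep N (I \<union> B \<union> I0)" using Bind[OF I0] by simp
    moreover have "I0 \<subseteq> E - (I \<union> B)" using I0X BW unfolding X0_def by blast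
    ultimately have iI0: "indep N2 I0" unfolding iN2 by blast
    have mx: "maxin N2 X2 I0" unfolding maxin_def
    proof (intro conjI allI impI)
      show "indep N2 I0" "I0 \<subseteq> X2" by fact+
      fix K assume K: "indep N2 K \<and> I0 \<subseteq> K \<and> K \<subseteq> X2"
      have iK: "indep N (I \<union> B \<union> K)" using K iN2 by blast
      show "K = I0"
      proof (rule ccontr)
        assume "K \<noteq> I0"
        then obtain e where e: "e \<in> K" "e \<notin> I0" using K by blast
        have eX2: "e \<in> X2" using e K by blast
        show False
        proof (cases "e \<in> W")
          case True
          have eB: "e \<notin> B" using eX2 unfolding X2_def by blast
          have "I \<union> (I0 \<union> insert e B) \<subseteq> I \<union> B \<union> K" using K e by blast
          then have "indep N (I \<union> (I0 \<union> insert e B))" using m_mono[OF N iK] by blast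
          then show False using Bmx[OF I0 True eB] by blast
        next
          case False
          have sub: "insert e I0 \<subseteq> X0" using eX2 False I0X unfolding X2_def X0_def by blast
          have "I \<union> insert e I0 \<subseteq> I \<union> B \<union> K" using K e by blast
          then have "indep N (I \<union> insert e I0)" using m_mono[OF N iK] by blast
          moreover have "insert e I0 \<subseteq> E - I" using sub unfolding X0_def by blast
          ultimately have "indep N1 (insert e I0)" unfolding iN1 by blast
          then have "insert e I0 = I0" using maxin_eq[OF I0] sub by blast
          then show False using e by blast
        qed
      qed
    qed
    show ?thesis unfolding ct base_def
    proof (intro conjI allI impI)
      show "indep (contr N2 X2) {}" unfolding contr_indep[OF N2m X2E mx] using iI0 by simp
      fix J assume J: "indep (contr N2 X2) J \<and> {} \<subseteq> J"
      then have J1: "J \<subseteq> ground N2 - X2" and J2: "indep N2 (I0 \<union> J)"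
        unfolding contr_indep[OF N2m X2E mx] by auto
      show "J = {}"
      proof (rule ccontr)
        assume "J \<noteq> {}" then obtain e where e: "e \<in> J" by blast
        have eU: "e \<in> W" "e \<notin> B" using J1 e U unfolding gN2 X2_def by blast+
        have iJ: "indep N (I \<union> B \<union> (I0 \<union> J))" using J2 iN2 by blast
        have "I \<union> (I0 \<union> insert e B) \<subseteq> I \<union> B \<union> (I0 \<union> J)" using e by blast
        then have "indep N (I \<union> (I0 \<union> insert e B))" using m_mono[OF N iJ] by blast
        then show False using Bmx[OF I0 eU] by blast
      qed
    qed
  qed

  have L: "loop M2 e" if e: "e \<in> W - B" for e
    unfolding loop_def gM2
  proof
    show "e \<in> E - (I \<union> B)" using e WE by blast
    show "\<not> indep M2 {e}"
    proof
      assume "indep M2 {e}"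
      then have "indep M (I \<union> B \<union> {e})" using iM2 by blast
      moreover have "I \<union> B \<union> {e} = I \<union> insert e B" by blast
      moreover have "insert e B \<subseteq> E - I" using e WE BEI by blast
      ultimately have "indep M1 (insert e B)" unfolding iM1 by simp
      then have "insert e B = B" using Bmax e BW by blast
      then show False using e by blast
    qed
  qed

  have K: "V \<subseteq> W - B" if wv: "wave M2 N2 V" for V
  proof -
    from wv have VE: "V \<subseteq> E - (I \<union> B)"
      and "\<exists>B2. base (restr M2 V) B2 \<and> indep (contr_to N2 V) B2" unfolding wave_def gM2 by auto
    then obtain B2 where bB2': "base (restr M2 V) B2" and iB2N: "indep (contr_to N2 V) B2" by blast
    have B2V: "B2 \<subseteq> V" and iB2: "indep M2 B2" using base_indep[OF bB2'] unfolding indep_restr by auto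
    have B2max: "K = B2" if "indep M2 K" "B2 \<subseteq> K" "K \<subseteq> V" for K
      using base_eq[OF bB2', of K] that unfolding indep_restr by blast
    have IBB2: "indep M (I \<union> B \<union> B2)" using iB2 iM2 by blast
    have h1: "W \<union> V \<subseteq> ground M1" unfolding gM1 using WE VE by blast
    have h2: "base (restr M1 (W \<union> V)) (B \<union> B2)" unfolding base_def indep_restr
    proof (intro conjI allI impI)
      have "I \<union> (B \<union> B2) = I \<union> B \<union> B2" by blast
      then show "indep M1 (B \<union> B2)" unfolding iM1 using BEI B2V VE IBB2 by auto
      show "B \<union> B2 \<subseteq> W \<union> V" using BW B2V by blast
      fix K assume K: "(indep M1 K \<and> K \<subseteq> W \<union> V) \<and> B \<union> B2 \<subseteq> K"
      have "indep M1 (K \<inter> W)" using m_mono[OF M1m] K by blast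
      then have KW: "K \<inter> W = B" using Bmax K BW by blast
      have KE: "K \<subseteq> E - I" and iK: "indep M (I \<union> K)" using K iM1 by blast+
      have "indep M2 (K - B)" unfolding iM2
      proof
        show "K - B \<subseteq> E - (I \<union> B)" using KE by blast
        have "I \<union> B \<union> (K - B) = I \<union> K" using K by blast
        then show "indep M (I \<union> B \<union> (K - B))" using iK by simp
      qed
      moreover have "K - B \<subseteq> V" using K KW by blast
      moreover have "B2 \<subseteq> K - B" using K VE B2V by blast
      ultimately have "K - B = B2" using B2max by blast
      then show "K = B \<union> B2" using K by blast
    qed
    have h3: "indep (contr_to N1 (W \<union> V)) (B \<union> B2)"
    proof -
      define S where "S = E - I - (W \<union> V)"
      have ct: "contr_to N1 (W \<union> V) = contr N1 S" unfolding contr_to_def gN1 S_def ..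
      have SE: "S \<subseteq> ground N1" unfolding gN1 S_def by blast
      obtain I2 where I2: "maxin N1 S I2" using m_IM[OF N1m m_ax2[OF N1m] _ SE] by blast
      have I2S: "I2 \<subseteq> S" using maxinD(2)[OF I2] .
      have "I2 \<subseteq> X0" using I2S unfolding S_def X0_def by blast
      then obtain I0' where I0': "maxin N1 X0 I0'" and I2I0: "I2 \<subseteq> I0'"
        using m_IM[OF N1m maxinD(1)[OF I2] _ X0E] by blast
      have "indep N (I \<union> (I0' \<union> B))" using Bind[OF I0'] .
      moreover have "I \<union> B \<union> I2 \<subseteq> I \<union> (I0' \<union> B)" using I2I0 by blast
      ultimately have "indep N (I \<union> B \<union> I2)" using m_mono[OF N] by blast
      moreover have "I2 \<subseteq> E - (I \<union> B)" using I2S BW unfolding S_def by blast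
      ultimately have iI2: "indep N2 I2" using iN2 by blast
      define X2 where "X2 = E - (I \<union> B) - V"
      have ct2: "contr_to N2 V = contr N2 X2" unfolding contr_to_def gN2 X2_def ..
      have X2E: "X2 \<subseteq> ground N2" unfolding gN2 X2_def by blast
      have "I2 \<subseteq> X2" using I2S BW unfolding S_def X2_def by blast
      then obtain I1 where I1: "maxin N2 X2 I1" and I2I1: "I2 \<subseteq> I1"
        using m_IM[OF N2m iI2 _ X2E] by blast
      have "indep N2 (I1 \<union> B2)" using iB2N unfolding ct2 contr_indep[OF N2m X2E I1] by blast
      then have "indep N (I \<union> B \<union> (I1 \<union> B2))" using iN2 by blast
      moreover have "I \<union> (I2 \<union> (B \<union> B2)) \<subseteq> I \<union> B \<union> (I1 \<union> B2)" using I2I1 by blast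
      ultimately have iN: "indep N (I \<union> (I2 \<union> (B \<union> B2)))" using m_mono[OF N] by blast
      have "I2 \<union> (B \<union> B2) \<subseteq> E - I" using I2S BEI B2V VE unfolding S_def by blast
      then have "indep N1 (I2 \<union> (B \<union> B2))" unfolding iN1 using iN by blast
      moreover have "B \<union> B2 \<subseteq> ground N1 - S" unfolding gN1 S_def using BEI BW B2V VE by blast
      ultimately show ?thesis unfolding ct contr_indep[OF N1m SE I2] by blast
    qed
    have "wave M1 N1 (W \<union> V)" unfolding wave_def using h1 h2 h3 by blast
    then have "W \<union> V \<subseteq> W" by (rule wsub)
    then show "V \<subseteq> W - B" using VE by blast
  qed

  have cnd: "cond M2 N2" unfolding cond_def
  proof (intro allI impI)
    fix V assume "wave M2 N2 V"
    then have "V \<subseteq> W - B" by (rule K)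
    then have "base (contr_to N2 V) {}" by (rule R)
    then show "\<exists>B'. base (contr_to N2 V) B' \<and> indep M2 B'" using m_ax2[OF M2m] by blast
  qed
  have WU: "wave_union M2 N2 \<subseteq> W - B" unfolding wave_union_def using K by blast
  have cp: "cond_plus M2 N2" unfolding cond_plus_def rank_zero_def using L WU R[OF WU] by blast
  show ?thesis unfolding nice_feasible_def feasible_def using IBM IBN cnd cp unfolding M2_def N2_def by blast
qed

end
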